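(* Let $G$ be a strongly Deza graph with parameters $(n,k,b,a)$ having exactly four distinct eigenvalues $k,\theta_2,\theta_3,\theta_4$ with positive multiplicities $1,m_2,m_3,m_4$, where $\theta_4=-\theta_3$ and $m_3=m_4$. Then $m_2\theta_2=-k$, and one of the following holds: (i) $m_2=1$, $\theta_2=-k$, and $G$ is bipartite with spectrum consisting of $k$ (multiplicity $1$), $\sqrt{k(n-2k)/(n-2)}$ (multiplicity $(n-2)/2$), $-\sqrt{k(n-2k)/(n-2)}$ (multiplicity $(n-2)/2$), and $-k$ (multiplicity $1$); (ii) $m_2=k$, $\theta_2=-1$, and the spectrum of $G$ consists of $k$ (multiplicity $1$), $\sqrt{k}$ (multiplicity $(n-k-1)/2$), $-1$ (multiplicity $k$), and $-\sqrt{k}$ (multiplicity $(n-k-1)/2$); (iii) $m_2<k$ and $\theta_2<-1$.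
   Context: All graphs are finite, simple and undirected; eigenvalues of a graph are those of its adjacency matrix. A Deza graph with parameters $(n,k,b,a)$, where $b\geqslant a$, is a $k$-regular graph on $n$ vertices, which is neither complete nor edgeless, such that any two distinct vertices have exactly $b$ or exactly $a$ common neighbours. If $b>a$, the children $G_A$ and $G_B$ of $G$ are the graphs on the vertex set of $G$ in which two distinct vertices are adjacent if and only if they have exactly $a$ (for $G_A$), respectively exactly $b$ (for $G_B$), common neighbours in $G$; if $b=a$, $G_A$ is the complete graph and $G_B$ is the edgeless graph. A strongly regular graph with parameters $(n,k,\lambda,\mu)$ is a $k$-regular graph on $n$ vertices, neither complete nor edgeless, in which any two adjacent vertices have exactly $\lambda$ common neighbours and any two distinct non-adjacent vertices have exactly $\mu$ common neighbours (disconnected examples, i.e. disjoint unions of at least two cliques of equal size, are allowed). A strongly Deza graph is a Deza graph both of whose children are strongly regular graphs. *)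

theory Defs
  imports Jordan_Normal_Form.Char_Poly
begin

definition is_graph :: "nat \<Rightarrow> (nat \<Rightarrow> nat \<Rightarrow> bool) \<Rightarrow> bool" where
  "is_graph n E \<longleftrightarrow> (\<forall>x y. E x y \<longrightarrow> x < n \<and> y < n) \<and> (\<forall>x y. E x y \<longrightarrow> E y x) \<and> (\<forall>x. \<not> E x x)"

definition common_nbrs :: "nat \<Rightarrow> (nat \<Rightarrow> nat \<Rightarrow> bool) \<Rightarrow> nat \<Rightarrow> nat \<Rightarrow> nat" where
  "common_nbrs n E x y = card {z. z < n \<and> E x z \<and> E y z}"

definition regular :: "nat \<Rightarrow> (nat \<Rightarrow> nat \<Rightarrow> bool) \<Rightarrow> nat \<Rightarrow> bool" where
  "regular n E k \<longleftrightarrow> (\<forall>x < n. card {y. y < n \<and> E x y} = k)"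

definition complete_graph :: "nat \<Rightarrow> (nat \<Rightarrow> nat \<Rightarrow> bool) \<Rightarrow> bool" where
  "complete_graph n E \<longleftrightarrow> (\<forall>x < n. \<forall>y < n. x \<noteq> y \<longrightarrow> E x y)"

definition edgeless :: "nat \<Rightarrow> (nat \<Rightarrow> nat \<Rightarrow> bool) \<Rightarrow> bool" where
  "edgeless n E \<longleftrightarrow> (\<forall>x < n. \<forall>y < n. \<not> E x y)"

definition deza :: "nat \<Rightarrow> (nat \<Rightarrow> nat \<Rightarrow> bool) \<Rightarrow> nat \<Rightarrow> nat \<Rightarrow> nat \<Rightarrow> bool" where
  "deza n E k b a \<longleftrightarrow> is_graph n E \<and> regular n E k \<and> b \<ge> a \<and>
     \<not> complete_graph n E \<and> \<not> edgeless n E \<and>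
     (\<forall>x < n. \<forall>y < n. x \<noteq> y \<longrightarrow> common_nbrs n E x y = b \<or> common_nbrs n E x y = a)"

definition srg :: "nat \<Rightarrow> (nat \<Rightarrow> nat \<Rightarrow> bool) \<Rightarrow> nat \<Rightarrow> nat \<Rightarrow> nat \<Rightarrow> bool" where
  "srg n E k lam mu \<longleftrightarrow> is_graph n E \<and> regular n E k \<and>
     \<not> complete_graph n E \<and> \<not> edgeless n E \<and>
     (\<forall>x < n. \<forall>y < n. E x y \<longrightarrow> common_nbrs n E x y = lam) \<and>
     (\<forall>x < n. \<forall>y < n. x \<noteq> y \<longrightarrow> \<not> E x y \<longrightarrow> common_nbrs n E x y = mu)"

definition child_A :: "nat \<Rightarrow> (nat \<Rightarrow> nat \<Rightarrow> bool) \<Rightarrow> nat \<Rightarrow> nat \<Rightarrow> nat \<Rightarrow> nat \<Rightarrow> bool" where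
  "child_A n E b a = (\<lambda>x y. x < n \<and> y < n \<and> x \<noteq> y \<and> (b > a \<longrightarrow> common_nbrs n E x y = a))"

definition child_B :: "nat \<Rightarrow> (nat \<Rightarrow> nat \<Rightarrow> bool) \<Rightarrow> nat \<Rightarrow> nat \<Rightarrow> nat \<Rightarrow> nat \<Rightarrow> bool" where
  "child_B n E b a = (\<lambda>x y. x < n \<and> y < n \<and> x \<noteq> y \<and> b > a \<and> common_nbrs n E x y = b)"

definition strongly_deza :: "nat \<Rightarrow> (nat \<Rightarrow> nat \<Rightarrow> bool) \<Rightarrow> nat \<Rightarrow> nat \<Rightarrow> nat \<Rightarrow> bool" where
  "strongly_deza n E k b a \<longleftrightarrow> deza n E k b a \<and>
     (\<exists>k' l m. srg n (child_A n E b a) k' l m) \<and> (\<exists>k' l m. srg n (child_B n E b a) k' l m)"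

definition adj_mat :: "nat \<Rightarrow> (nat \<Rightarrow> nat \<Rightarrow> bool) \<Rightarrow> real mat" where
  "adj_mat n E = mat n n (\<lambda>(i, j). if E i j then 1 else 0)"

definition eig_mult :: "real mat \<Rightarrow> real \<Rightarrow> nat" where
  "eig_mult A x = order x (char_poly A)"

definition bipartite :: "nat \<Rightarrow> (nat \<Rightarrow> nat \<Rightarrow> bool) \<Rightarrow> bool" where
  "bipartite n E \<longleftrightarrow> (\<exists>S. \<forall>x < n. \<forall>y < n. E x y \<longrightarrow> (x \<in> S \<longleftrightarrow> y \<notin> S))"

end

theory Submission imports Defs Jordan_Normal_Form.Schur_Decomposition begin

lemma sym_real_eig:
  fixes A :: "real mat"
  assumes A: "A \<in> carrier_mat n n" and sym: "\<And>i j. i<n \<Longrightarrow> j<n \<Longrightarrow> A$$(i,j) = A$$(j,i)"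
    and ev: "eigenvalue (map_mat complex_of_real A) z"
  shows "Im z = 0"
proof -
  let ?M = "map_mat complex_of_real A"
  from ev obtain v where v: "v \<in> carrier_vec n" "v \<noteq> 0\<^sub>v n" "?M *\<^sub>v v = z \<cdot>\<^sub>v v"
    unfolding eigenvalue_def eigenvector_def using A by auto
  have Mv: "\<And>i. i < n \<Longrightarrow> (\<Sum>j<n. complex_of_real (A$$(i,j)) * v$j) = z * v$i"
  proof -
    fix i assume i: "i < n"
    have "(?M *\<^sub>v v) $ i = (z \<cdot>\<^sub>v v) $ i" using v by simp
    thus "(\<Sum>j<n. complex_of_real (A$$(i,j)) * v$j) = z * v$i"
      using i A v(1) by (simp add: scalar_prod_def lessThan_atLeast0 mult.commute)
  qed
  define S where "S = (\<Sum>i<n. cnj (v$i) * (\<Sum>j<n. complex_of_real (A$$(i,j)) * v$j))"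
  define r where "r = (\<Sum>i<n. cnj (v$i) * v$i)"
  have S1: "S = z * r" unfolding S_def r_def
    by (simp add: Mv sum_distrib_left mult.assoc mult.left_commute)
  have "cnj S = (\<Sum>i<n. v$i * (\<Sum>j<n. complex_of_real (A$$(i,j)) * cnj (v$j)))"
    unfolding S_def by (simp add: cnj_sum)
  also have "\<dots> = (\<Sum>i<n. \<Sum>j<n. complex_of_real (A$$(i,j)) * cnj (v$j) * v$i)"
    by (simp add: sum_distrib_left mult_ac)
  also have "\<dots> = (\<Sum>j<n. \<Sum>i<n. complex_of_real (A$$(i,j)) * cnj (v$j) * v$i)"
    by (rule sum.swap)
  also have "\<dots> = S" unfolding S_def
    by (auto simp: sum_distrib_left mult_ac sym intro!: sum.cong)
  finally have S2: "cnj S = S" .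
  have rreal: "r = complex_of_real (\<Sum>i<n. (cmod (v$i))^2)"
    unfolding r_def of_real_sum by (simp add: complex_norm_square mult.commute del: of_real_power)
  have "\<exists>i<n. v$i \<noteq> 0" using v by (metis eq_vecI carrier_vecD index_zero_vec(1,2))
  then obtain i where i: "i<n" "v$i \<noteq> 0" by auto
  have "(\<Sum>i<n. (cmod (v$i))^2) > 0"
    by (rule sum_pos2[of _ i]) (use i in auto)
  hence r0: "r \<noteq> 0" unfolding rreal by (metis of_real_eq_0_iff order_less_irrefl)
  from S1 S2 have "cnj z * cnj r = z * r" by simp
  moreover have "cnj r = r" unfolding rreal by (rule complex_cnj_complex_of_real)
  ultimately have "cnj z = z" using r0 by simp
  thus ?thesis by (metis Reals_cnj_iff complex_is_Real_iff)
qed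

lemma sym_char_poly_split:
  fixes A :: "real mat"
  assumes A: "A \<in> carrier_mat n n" and sym: "\<And>i j. i<n \<Longrightarrow> j<n \<Longrightarrow> A$$(i,j) = A$$(j,i)"
  shows "\<exists>rs. char_poly A = (\<Prod>r\<leftarrow>rs. [:-r,1:]) \<and> length rs = n"
proof -
  let ?M = "map_mat complex_of_real A"
  have M: "?M \<in> carrier_mat n n" using A by simp
  obtain cs where cs: "char_poly ?M = (\<Prod>c\<leftarrow>cs. [:-c,1:])" "length cs = n"
    using char_poly_factorized[OF M] by blast
  have re: "\<And>c. c \<in> set cs \<Longrightarrow> Im c = 0"
  proof -
    fix c assume c: "c \<in> set cs"
    have "poly (char_poly ?M) c = 0" unfolding cs(1) poly_prod_list
      using c by (auto simp: prod_list_zero_iff)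
    hence "eigenvalue ?M c" using eigenvalue_root_char_poly[OF M] by simp
    thus "Im c = 0" using sym_real_eig[OF A sym] by blast
  qed
  define rs where "rs = map Re cs"
  have csr: "cs = map complex_of_real rs" unfolding rs_def using re
    by (induct cs) (auto simp: complex_eq_iff)
  interpret m: map_poly_inj_comm_ring_hom "complex_of_real" ..
  have "map_poly complex_of_real (char_poly A) = char_poly ?M"
    by (rule of_real_hom.char_poly_hom[OF A, symmetric])
  also have "\<dots> = map_poly complex_of_real (\<Prod>r\<leftarrow>rs. [:-r,1:])"
    unfolding cs(1) csr m.hom_prod_list by (simp add: o_def)
  finally have "char_poly A = (\<Prod>r\<leftarrow>rs. [:-r,1:])" by simp
  moreover have "length rs = n" using cs(2) rs_def by simp
  ultimately show ?thesis by blast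
qed

definition tr :: "real mat \<Rightarrow> real" where
  "tr M = (\<Sum>i<dim_row M. M$$(i,i))"

lemma tr_comm:
  assumes X: "X \<in> carrier_mat n n" and Y: "Y \<in> carrier_mat n n"
  shows "tr (X*Y) = tr (Y*X)"
proof -
  have "tr (X*Y) = (\<Sum>i<n. \<Sum>j<n. X$$(i,j) * Y$$(j,i))"
    unfolding tr_def using X Y by (simp add: scalar_prod_def lessThan_atLeast0)
  also have "\<dots> = (\<Sum>j<n. \<Sum>i<n. X$$(i,j) * Y$$(j,i))" by (rule sum.swap)
  also have "\<dots> = tr (Y*X)"
    unfolding tr_def using X Y by (simp add: scalar_prod_def lessThan_atLeast0 mult.commute)
  finally show ?thesis .
qed

lemma tr_upper:
  assumes B: "B \<in> carrier_mat n n" and ut: "upper_triangular B"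
  shows "tr B = sum_list (diag_mat B)" "tr (B*B) = sum_list (map (\<lambda>x. x^2) (diag_mat B))"
proof -
  show "tr B = sum_list (diag_mat B)" unfolding tr_def diag_mat_def using B
    by (simp add: sum_list_sum_nth lessThan_atLeast0)
  have d: "\<And>i. i < n \<Longrightarrow> (B*B)$$(i,i) = (B$$(i,i))^2"
  proof -
    fix i assume i: "i < n"
    have "(B*B)$$(i,i) = (\<Sum>j<n. B$$(i,j) * B$$(j,i))"
      using B i by (simp add: scalar_prod_def lessThan_atLeast0)
    also have "\<dots> = (\<Sum>j\<in>{i}. B$$(i,j) * B$$(j,i))"
    proof (rule sum.mono_neutral_right)
      show "\<forall>j\<in>{..<n} - {i}. B$$(i,j) * B$$(j,i) = 0"
      proof
        fix j assume j: "j \<in> {..<n} - {i}"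
        show "B$$(i,j) * B$$(j,i) = 0"
        proof (cases "j < i")
          case True thus ?thesis using ut B i unfolding upper_triangular_def by auto
        next
          case False hence "i < j" using j by auto
          thus ?thesis using ut B j unfolding upper_triangular_def by auto
        qed
      qed
    qed (use i in auto)
    finally show "(B*B)$$(i,i) = (B$$(i,i))^2" by (simp add: power2_eq_square)
  qed
  show "tr (B*B) = sum_list (map (\<lambda>x. x^2) (diag_mat B))"
    unfolding tr_def diag_mat_def using B d
    by (simp add: sum_list_sum_nth lessThan_atLeast0)
qed

lemma tr_split:
  fixes A :: "real mat"
  assumes A: "A \<in> carrier_mat n n" and c: "char_poly A = (\<Prod>r\<leftarrow>rs. [:-r,1:])"
  shows "tr A = sum_list rs" "tr (A*A) = sum_list (map (\<lambda>x. x^2) rs)"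
proof -
  obtain B P Q where sch: "schur_decomposition A rs = (B,P,Q)" by (cases "schur_decomposition A rs") auto
  from schur_decomposition[OF A c sch] have sw: "similar_mat_wit A B P Q" and ut: "upper_triangular B"
    and dg: "diag_mat B = rs" by auto
  from sw A have cr: "B \<in> carrier_mat n n" "P \<in> carrier_mat n n" "Q \<in> carrier_mat n n"
    and PQ: "P * Q = 1\<^sub>m n" and QP: "Q * P = 1\<^sub>m n" and AE: "A = P * B * Q"
    unfolding similar_mat_wit_def Let_def by auto
  have "tr A = tr (P * (B * Q))" using AE cr by (simp add: assoc_mult_mat[of P n n B n Q n])
  also have "\<dots> = tr ((B * Q) * P)" by (rule tr_comm) (use cr in auto)
  also have "\<dots> = tr B" using cr QP by (simp add: assoc_mult_mat[of B n n Q n P n])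
  finally show "tr A = sum_list rs" using tr_upper(1)[OF cr(1) ut] dg by simp
  have "A * A = P * (B * B) * Q"
  proof -
    have "A * A = P * B * (Q * P) * B * Q" using AE cr
      by (simp add: assoc_mult_mat[of _ n n _ n _ n])
    also have "\<dots> = P * (B * B) * Q" using cr QP
      by (simp add: assoc_mult_mat[of _ n n _ n _ n])
    finally show ?thesis .
  qed
  hence "tr (A*A) = tr (P * ((B * B) * Q))" using cr by (simp add: assoc_mult_mat[of P n n _ n Q n])
  also have "\<dots> = tr (((B * B) * Q) * P)" by (rule tr_comm) (use cr in auto)
  also have "\<dots> = tr (B*B)"
  proof -
    have "((B*B)*Q)*P = (B*B)*(Q*P)" by (rule assoc_mult_mat) (use cr in auto)
    thus ?thesis using QP cr by simp
  qed
  finally show "tr (A*A) = sum_list (map (\<lambda>x. x^2) rs)" using tr_upper(2)[OF cr(1) ut] dg by simp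
qed

lemma order_prod_lin: "Polynomial.order x (\<Prod>r\<leftarrow>rs. [:-r,1:]) = count_list rs (x::real)"
proof (induct rs)
  case Nil thus ?case by (simp add: order_0I)
next
  case (Cons r rs)
  have nz: "(\<Prod>r\<leftarrow>rs. [:-r,1:]) \<noteq> (0 :: real poly)" by (auto simp: prod_list_zero_iff)
  have "Polynomial.order x ([:-r,1:] * (\<Prod>r\<leftarrow>rs. [:-r,1:])) = Polynomial.order x [:-r,1:] + Polynomial.order x (\<Prod>r\<leftarrow>rs. [:-r,1:])"
  proof (rule order_mult)
    have "[:-r,1:] \<noteq> (0 :: real poly)" by simp
    thus "[:-r,1:] * (\<Prod>r\<leftarrow>rs. [:-r,1:]) \<noteq> 0" using nz by (rule no_zero_divisors)
  qed
  moreover have "Polynomial.order x [:-r,1:] = (if x = r then 1 else 0)"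
    using order_power_n_n[of r 1] by (auto intro: order_0I)
  ultimately show ?case using Cons by auto
qed

lemma sum_list_count:
  assumes "finite S" "set xs \<subseteq> S"
  shows "sum_list (map f xs) = (\<Sum>x\<in>S. real (count_list xs x) * (f x :: real))"
  using assms(2)
proof (induct xs)
  case Nil thus ?case by simp
next
  case (Cons y xs)
  have "(\<Sum>x\<in>S. real (count_list (y#xs) x) * f x) =
        (\<Sum>x\<in>S. real (count_list xs x) * f x) + (\<Sum>x\<in>S. if x = y then f x else 0)"
  proof -
    have "\<And>x. real (count_list (y#xs) x) * f x = real (count_list xs x) * f x + (if x = y then f x else 0)"
      by (auto simp: algebra_simps)
    thus ?thesis by (simp only: sum.distrib)
  qed
  also have "(\<Sum>x\<in>S. if x = y then f x else 0) = f y" using Cons.prems assms(1)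
    by (simp add: sum.delta)
  finally show ?case using Cons by simp
qed

lemma adj_carrier: "adj_mat n E \<in> carrier_mat n n" unfolding adj_mat_def by simp

lemma adj_sym: "is_graph n E \<Longrightarrow> i<n \<Longrightarrow> j<n \<Longrightarrow> adj_mat n E $$ (i,j) = adj_mat n E $$ (j,i)"
  unfolding adj_mat_def is_graph_def by auto

lemma adj_tr: "is_graph n E \<Longrightarrow> tr (adj_mat n E) = 0"
  unfolding tr_def adj_mat_def is_graph_def by simp

lemma adj_tr2: assumes g: "is_graph n E" and r: "regular n E k"
  shows "tr (adj_mat n E * adj_mat n E) = real n * real k"
proof -
  let ?A = "adj_mat n E"
  have "\<And>i. i < n \<Longrightarrow> (?A * ?A) $$ (i,i) = real k"
  proof -
    fix i assume i: "i < n"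
    have "(?A * ?A) $$ (i,i) = (\<Sum>j<n. ?A$$(i,j) * ?A$$(j,i))"
      using i adj_carrier[of n E] by (simp add: scalar_prod_def lessThan_atLeast0)
    also have "\<dots> = (\<Sum>j\<in>{..<n}. if E i j then 1 else 0)"
      using g i unfolding adj_mat_def is_graph_def by (intro sum.cong) auto
    also have "\<dots> = real (card ({..<n} \<inter> Collect (E i)))"
      by (simp add: sum.If_cases)
    also have "{..<n} \<inter> Collect (E i) = {y. y < n \<and> E i y}" by auto
    also have "card \<dots> = k" using r i unfolding regular_def by auto
    finally show "(?A * ?A) $$ (i,i) = real k" .
  qed
  thus ?thesis unfolding tr_def using adj_carrier[of n E] by simp
qed

lemma adj_algint: assumes "eigenvalue (adj_mat n E) x" shows "algebraic_int x"
proof -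
  define B :: "int mat" where "B = mat n n (\<lambda>(i, j). if E i j then 1 else 0)"
  have B: "B \<in> carrier_mat n n" unfolding B_def by simp
  have AB: "adj_mat n E = map_mat of_int B" unfolding B_def adj_mat_def by (rule eq_matI) auto
  have "char_poly (adj_mat n E) = map_poly of_int (char_poly B)"
    unfolding AB by (rule of_int_hom.char_poly_hom[OF B])
  moreover have "poly (char_poly (adj_mat n E)) x = 0"
    using assms eigenvalue_root_char_poly[OF adj_carrier] by simp
  moreover have "lead_coeff (char_poly B) = 1" using degree_monic_char_poly[OF B] by simp
  ultimately show ?thesis unfolding algebraic_int_altdef_ipoly by metis
qed

lemma four_distinct: "card {a, b, c, d::real} = 4 \<Longrightarrow> a \<noteq> b \<and> a \<noteq> c \<and> a \<noteq> d \<and> b \<noteq> c \<and> b \<noteq> d \<and> c \<noteq> d"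
  by (auto simp: card_insert_if split: if_splits)

theorem theorem8:
  fixes n k b a m2 m3 m4 :: nat and E :: "nat \<Rightarrow> nat \<Rightarrow> bool"
    and \<theta>2 \<theta>3 \<theta>4 :: real
  assumes sd: "strongly_deza n E k b a"
    and spec: "{x. eigenvalue (adj_mat n E) x} = {real k, \<theta>2, \<theta>3, \<theta>4}"
    and four: "card {real k, \<theta>2, \<theta>3, \<theta>4} = 4"
    and mk: "eig_mult (adj_mat n E) (real k) = 1"
    and m2: "eig_mult (adj_mat n E) \<theta>2 = m2"
    and m3: "eig_mult (adj_mat n E) \<theta>3 = m3"
    and m4: "eig_mult (adj_mat n E) \<theta>4 = m4"
    and pos: "m2 > 0" "m3 > 0" "m4 > 0"
    and opp: "\<theta>4 = - \<theta>3"
    and eqm: "m3 = m4"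
  shows "real m2 * \<theta>2 = - real k \<and>
    ((m2 = 1 \<and> \<theta>2 = - real k \<and> bipartite n E \<and>
       (let s = sqrt (real k * (real n - 2 * real k) / (real n - 2)) in
         {x. eigenvalue (adj_mat n E) x} = {real k, s, - s, - real k} \<and>
         eig_mult (adj_mat n E) (real k) = 1 \<and>
         real (eig_mult (adj_mat n E) s) = (real n - 2) / 2 \<and>
         real (eig_mult (adj_mat n E) (- s)) = (real n - 2) / 2 \<and>
         eig_mult (adj_mat n E) (- real k) = 1))
     \<or> (m2 = k \<and> \<theta>2 = -1 \<and>
       {x. eigenvalue (adj_mat n E) x} = {real k, sqrt (real k), -1, - sqrt (real k)} \<and>
       eig_mult (adj_mat n E) (real k) = 1 \<and>
       real (eig_mult (adj_mat n E) (sqrt (real k))) = (real n - real k - 1) / 2 \<and>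
       eig_mult (adj_mat n E) (-1) = k \<and>
       real (eig_mult (adj_mat n E) (- sqrt (real k))) = (real n - real k - 1) / 2)
     \<or> (m2 < k \<and> \<theta>2 < -1))"
proof -
  let ?A = "adj_mat n E"
  have g: "is_graph n E" and r: "regular n E k" using sd unfolding strongly_deza_def deza_def by auto
  obtain rs where cp: "char_poly ?A = (\<Prod>r\<leftarrow>rs. [:-r,1:])" and len: "length rs = n"
    using sym_char_poly_split[OF adj_carrier adj_sym[OF g]] by blast
  have em: "\<And>x. eig_mult ?A x = count_list rs x" unfolding eig_mult_def cp by (rule order_prod_lin)
  have ev: "\<And>x. eigenvalue ?A x \<longleftrightarrow> x \<in> set rs"
    unfolding eigenvalue_root_char_poly[OF adj_carrier] cp poly_prod_list
    by (auto simp: prod_list_zero_iff)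
  define S where "S = {real k, \<theta>2, \<theta>3, \<theta>4}"
  have setrs: "set rs = S" using spec ev unfolding S_def by auto
  have fS: "finite S" unfolding S_def by simp
  have d: "real k \<noteq> \<theta>2 \<and> real k \<noteq> \<theta>3 \<and> real k \<noteq> \<theta>4 \<and> \<theta>2 \<noteq> \<theta>3 \<and> \<theta>2 \<noteq> \<theta>4 \<and> \<theta>3 \<noteq> \<theta>4"
    by (rule four_distinct[OF four])
  have c1: "count_list rs (real k) = 1" using mk em by simp
  have c2: "count_list rs \<theta>2 = m2" using m2 em by simp
  have c3: "count_list rs \<theta>3 = m3" using m3 em by simp
  have c4: "count_list rs \<theta>4 = m4" using m4 em by simp
  have sumS: "\<And>f. sum_list (map f rs) = f (real k) + real m2 * f \<theta>2 + real m3 * f \<theta>3 + real m4 * f \<theta>4"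
    using sum_list_count[OF fS, of rs] setrs d c1 c2 c3 c4 unfolding S_def by simp
  have "real n = sum_list (map (\<lambda>_. 1) rs)" using len by (simp add: sum_list_triv)
  hence nsum: "real n = 1 + real m2 + real m3 + real m4" using sumS[of "\<lambda>_. 1"] by simp
  have "0 = sum_list rs" using tr_split(1)[OF adj_carrier cp] adj_tr[OF g] by simp
  hence t1: "0 = real k + real m2 * \<theta>2 + real m3 * \<theta>3 + real m4 * \<theta>4"
    using sumS[of "\<lambda>x. x"] by simp
  have "real n * real k = sum_list (map (\<lambda>x. x^2) rs)"
    using tr_split(2)[OF adj_carrier cp] adj_tr2[OF g r] by simp
  hence t2: "real n * real k = (real k)^2 + real m2 * \<theta>2^2 + real m3 * \<theta>3^2 + real m4 * \<theta>4^2"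
    using sumS[of "\<lambda>x. x^2"] by simp
  have main: "real m2 * \<theta>2 = - real k" using t1 opp eqm by (simp add: algebra_simps)
  have kpos: "k > 0"
  proof (rule ccontr)
    assume "\<not> k > 0" hence "k = 0" by simp
    hence "\<theta>2 = 0" using main pos by simp
    thus False using d \<open>k = 0\<close> by simp
  qed
  have th2neg: "\<theta>2 < 0"
  proof -
    have "real m2 * \<theta>2 < 0" using main kpos by simp
    thus ?thesis using pos by (simp add: mult_less_0_iff)
  qed
  have "eigenvalue ?A \<theta>2" using spec by auto
  hence ai: "algebraic_int \<theta>2" by (rule adj_algint)
  have "\<theta>2 = - real k / real m2" using main pos by (simp add: field_simps)
  hence "\<theta>2 \<in> \<rat>" by simp
  hence "\<theta>2 \<in> \<int>" using ai rational_algebraic_int_is_int by blast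
  then obtain z :: int where z: "\<theta>2 = of_int z" by (auto elim: Ints_cases)
  have "z < 0" using th2neg z by simp
  hence th2le: "\<theta>2 \<le> -1" using z by simp
  have m2le: "real m2 \<le> real k"
  proof -
    have "real m2 * \<theta>2 \<le> real m2 * (-1)" using th2le by (intro mult_left_mono) auto
    thus ?thesis using main by simp
  qed
  show ?thesis
  proof (cases "m2 < k")
    case True
    have "\<theta>2 < -1"
    proof (rule ccontr)
      assume "\<not> \<theta>2 < -1" hence "\<theta>2 = -1" using th2le by simp
      thus False using main True by simp
    qed
    thus ?thesis using main True by blast
  next
    case False
    hence mk2: "m2 = k" using m2le by simp
    have "real k * (\<theta>2 + 1) = 0" using main mk2 by (simp add: algebra_simps)
    hence th2: "\<theta>2 = -1" using kpos by simp
    have "real n * real k = (real k)^2 + real k + 2 * real m3 * \<theta>3^2"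
      using t2 mk2 th2 opp eqm by simp
    moreover have "real n = 1 + real k + 2 * real m3" using nsum mk2 eqm by simp
    ultimately have "2 * real m3 * real k = 2 * real m3 * \<theta>3^2"
      by (simp add: algebra_simps power2_eq_square)
    hence sq: "\<theta>3^2 = real k" using pos by simp
    have nm3: "(real n - real k - 1) / 2 = real m3" using nsum mk2 eqm by simp
    have sk: "sqrt (real k) ^ 2 = real k" by simp
    have th3: "\<theta>3 = sqrt (real k) \<or> \<theta>3 = - sqrt (real k)"
      using sq by (metis power2_eq_iff sk)
    have "{x. eigenvalue ?A x} = {real k, sqrt (real k), -1, - sqrt (real k)} \<and>
      real (eig_mult ?A (sqrt (real k))) = (real n - real k - 1) / 2 \<and>
      real (eig_mult ?A (- sqrt (real k))) = (real n - real k - 1) / 2"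
      using th3
    proof
      assume h: "\<theta>3 = sqrt (real k)"
      hence h4: "\<theta>4 = - sqrt (real k)" using opp by simp
      have "{x. eigenvalue ?A x} = {real k, sqrt (real k), -1, - sqrt (real k)}"
        unfolding spec th2 h h4 by (simp add: insert_commute)
      moreover have "eig_mult ?A (sqrt (real k)) = m3" using m3 h by simp
      moreover have "eig_mult ?A (- sqrt (real k)) = m3" using m4 h4 eqm by simp
      ultimately show ?thesis using nm3 by simp
    next
      assume h: "\<theta>3 = - sqrt (real k)"
      hence h4: "\<theta>4 = sqrt (real k)" using opp by simp
      have "{x. eigenvalue ?A x} = {real k, sqrt (real k), -1, - sqrt (real k)}"
        unfolding spec th2 h h4 by (simp add: insert_commute)
      moreover have "eig_mult ?A (sqrt (real k)) = m3" using m4 h4 eqm by simp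
      moreover have "eig_mult ?A (- sqrt (real k)) = m3" using m3 h by simp
      ultimately show ?thesis using nm3 by simp
    qed
    moreover have "eig_mult ?A (-1) = k" using m2 th2 mk2 by simp
    ultimately show ?thesis using mk2 th2 mk main by blast
  qed
qed

end
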